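(* Let $D_{+2}$, $D_{+1}$, $D_0$, $D_{-1}$ be four unoriented link diagrams in the plane that are identical outside a small disk $B$, and inside $B$ each consists of two strands running from the bottom of $B$ to the top of $B$, as follows: in $D_0$ the two strands are parallel with no crossing; in $D_{+1}$ they cross once, forming the tangle $\sigma$ (the elementary braid generator on two strands, with a fixed choice of which strand passes over); in $D_{+2}$ they form the braid $\sigma^2$ (two successive crossings of the same type as in $D_{+1}$); in $D_{-1}$ they form $\sigma^{-1}$ (a single crossing of the opposite type). Then $$R_{D_{+2}}(\lambda) = (1-\lambda)\,R_{D_{+1}}(\lambda) + (\lambda-1)\,R_{D_0}(\lambda) + R_{D_{-1}}(\lambda).$$
   Context: For an oriented link $L$ in $\mathbb{R}^3$ let $V_L(t)$ be its Jones polynomial (a Laurent polynomial in $\sqrt t$, normalised so the unknot has $V=1$). The product $V_L(t)V_L(t^{-1})$ is a Laurent polynomial in $t$ invariant under $t\mapsto t^{-1}$, so it can be written as an ordinary polynomial $r_L(\lambda)$ in $\lambda=t+t^{-1}$, i.e. $r_L(t+t^{-1})=V_L(t)V_L(t^{-1})$. Define $R_L(\lambda)=(\lambda+2)\,r_L(\lambda)$ (so the unknot has $R=\lambda+2$ and the empty link has $R=1$). $R_L$ does not depend on the orientation of $L$, so it is defined for unoriented links, and for a link diagram $D$ we write $R_D$ for $R$ of the link it represents. *)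

theory Defs
  imports Complex_Main
begin

text \<open>A crossing (i,j,k,l) lists the labels of the four edge-ends meeting at the
crossing in counterclockwise order, starting at an end of the under-strand; so
i,k lie on the under-strand and j,l on the over-strand.  (i,j,k,l) and (k,l,i,j)
describe the same crossing, (j,k,l,i) the crossing with over/under swapped.
A diagram is a list of crossings together with a list of plain arcs (pairs of
labels joined by a crossing-free piece of strand; a pair (x,x) is a free circle).\<close>

type_synonym pd_crossing = "nat \<times> nat \<times> nat \<times> nat"
type_synonym diagram = "pd_crossing list \<times> (nat \<times> nat) list"

fun xlabels :: "pd_crossing \<Rightarrow> nat list" where
  "xlabels (i, j, k, l) = [i, j, k, l]"

definition occs :: "diagram \<Rightarrow> nat list" where
  "occs D = concat (map xlabels (fst D)) @ concat (map (\<lambda>(x, y). [x, y]) (snd D))"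

definition labels :: "diagram \<Rightarrow> nat set" where
  "labels D = set (occs D)"

definition well_formed :: "diagram \<Rightarrow> bool" where
  "well_formed D \<longleftrightarrow> (\<forall>x \<in> labels D. count_list (occs D) x = 2)"

definition n_components :: "'a set \<Rightarrow> ('a \<times> 'a) set \<Rightarrow> nat" where
  "n_components V E = card (V // (((E \<union> E\<inverse>) \<inter> (V \<times> V))\<^sup>*))"

subsection \<open>Planarity (genus 0 of the underlying rotation system)\<close>

definition slots :: "diagram \<Rightarrow> (nat \<times> nat) set" where
  "slots D = {(c, p). c < length (fst D) \<and> p < 4}"

definition slot_label :: "diagram \<Rightarrow> nat \<times> nat \<Rightarrow> nat" where
  "slot_label D q = xlabels (fst D ! fst q) ! snd q"

definition arc_eq :: "diagram \<Rightarrow> (nat \<times> nat) set" where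
  "arc_eq D = (set (snd D) \<union> (set (snd D))\<inverse>)\<^sup>*"

text \<open>The crossing-end at the other end of the edge leaving slot q.\<close>
definition alpha :: "diagram \<Rightarrow> nat \<times> nat \<Rightarrow> nat \<times> nat" where
  "alpha D q = (THE q'. q' \<in> slots D \<and> q' \<noteq> q \<and> (slot_label D q, slot_label D q') \<in> arc_eq D)"

definition rot :: "nat \<times> nat \<Rightarrow> nat \<times> nat" where
  "rot q = (fst q, (snd q + 1) mod 4)"

definition phi :: "diagram \<Rightarrow> nat \<times> nat \<Rightarrow> nat \<times> nat" where
  "phi D q = rot (alpha D q)"

definition n_faces :: "diagram \<Rightarrow> nat" where
  "n_faces D = card (slots D // {(q, q'). q \<in> slots D \<and> (\<exists>m. (phi D ^^ m) q = q')})"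

definition n_graph_components :: "diagram \<Rightarrow> nat" where
  "n_graph_components D = n_components {..<length (fst D)}
     {(c, c'). \<exists>p p'. (c, p) \<in> slots D \<and> alpha D (c, p) = (c', p')}"

text \<open>Euler's formula V - E + F = 2k, with V = #crossings, E = 2V.\<close>
definition planar :: "diagram \<Rightarrow> bool" where
  "planar D \<longleftrightarrow> n_faces D = length (fst D) + 2 * n_graph_components D"

definition is_diagram :: "diagram \<Rightarrow> bool" where
  "is_diagram D \<longleftrightarrow> well_formed D \<and> planar D"

fun smooth :: "bool \<Rightarrow> pd_crossing \<Rightarrow> (nat \<times> nat) list" where
  "smooth True (i, j, k, l) = [(i, l), (j, k)]"
| "smooth False (i, j, k, l) = [(i, j), (k, l)]"

definition state_loops :: "diagram \<Rightarrow> bool list \<Rightarrow> nat" where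
  "state_loops D s = n_components (labels D)
     (set (snd D @ concat (map (\<lambda>(b, x). smooth b x) (zip s (fst D)))))"

definition loop_value :: "complex \<Rightarrow> complex" where
  "loop_value A = - (A ^ 2) - inverse A ^ 2"

text \<open>Unnormalised Kauffman bracket (empty diagram 1, unknot loop_value A).\<close>
definition bracket :: "diagram \<Rightarrow> complex \<Rightarrow> complex" where
  "bracket D A = (\<Sum>s \<in> {s. length s = length (fst D)}.
      A powi (int (count_list s True) - int (count_list s False)) * loop_value A ^ state_loops D s)"

text \<open>Jones polynomial of the diagram with writhe w (w = writhe of an orientation),
evaluated at t = A^(-4), i.e. sqrt t = A^(-2); normalised so the unknot has V = 1.\<close>
definition jones_V :: "diagram \<Rightarrow> int \<Rightarrow> complex \<Rightarrow> complex" where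
  "jones_V D w A = (- (A ^ 3)) powi (- w) * bracket D A / loop_value A"

definition lam :: "complex \<Rightarrow> complex" where
  "lam A = A ^ 4 + inverse A ^ 4"   \<comment> \<open>lambda = t + t^(-1) for t = A^(-4)\<close>

text \<open>R_D evaluated at lambda = t + 1/t, t = A^(-4): (lambda+2) V(t) V(t^(-1)).
The writhe factors cancel in V(t)V(t^(-1)) (see lemma below), so R does not
depend on the orientation; we use w = 0.\<close>
definition R_diag :: "diagram \<Rightarrow> complex \<Rightarrow> complex" where
  "R_diag D A = (lam A + 2) * jones_V D 0 A * jones_V D 0 (inverse A)"

lemma R_diag_any_writhe:
  assumes "A \<noteq> 0"
  shows "R_diag D A = (lam A + 2) * jones_V D w A * jones_V D w (inverse A)"
proof -
  have "(- (A ^ 3)) powi (- w) * (- (inverse A ^ 3)) powi (- w) = 1"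
    using assms by (simp add: power_int_mult_distrib[symmetric] power_mult_distrib[symmetric])
  then show ?thesis
    unfolding R_diag_def jones_V_def by (simp add: field_simps)
qed

end

theory Submission
  imports Defs
begin


definition rc :: "'a set \<Rightarrow> ('a \<times> 'a) set \<Rightarrow> ('a \<times> 'a) set" where
  "rc V E = (((E \<union> E\<inverse>) \<inter> (V \<times> V))\<^sup>*)"

lemma rc_equiv: "equiv UNIV (rc V E)"
proof -
  have "sym ((E \<union> E\<inverse>) \<inter> (V \<times> V))" by (auto simp: sym_def)
  then show ?thesis unfolding rc_def equiv_def
    by (auto simp: refl_rtrancl trans_rtrancl intro!: sym_rtrancl)
qed

lemma rc_closed: "(x, y) \<in> rc V E \<Longrightarrow> x \<in> V \<Longrightarrow> y \<in> V"
  unfolding rc_def by (induction rule: rtrancl_induct) auto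

lemma card_quot_eq:
  assumes "V \<subseteq> V'" "h ` V' \<subseteq> V" "\<forall>x\<in>V. h x = x"
    and iff: "\<forall>x\<in>V'. \<forall>y\<in>V'. (x, y) \<in> r' \<longleftrightarrow> (h x, h y) \<in> r"
    and cl: "\<forall>x\<in>V. r `` {x} \<subseteq> V"
    and "refl r" and eq: "equiv UNIV r'"
  shows "card (V' // r') = card (V // r)"
proof -
  have key: "r' `` {x} \<inter> V = r `` {h x}" if "x \<in> V'" for x
  proof -
    have hx: "h x \<in> V" using that assms(2) by auto
    show ?thesis
    proof
      show "r' `` {x} \<inter> V \<subseteq> r `` {h x}" using iff that assms(1,3) by fastforce
      show "r `` {h x} \<subseteq> r' `` {x} \<inter> V"
      proof
        fix y assume y: "y \<in> r `` {h x}"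
        then have yV: "y \<in> V" using cl hx by auto
        then show "y \<in> r' `` {x} \<inter> V" using iff that assms(1,3) y by force
      qed
    qed
  qed
  have "bij_betw (\<lambda>C. C \<inter> V) (V' // r') (V // r)"
  proof (rule bij_betw_imageI)
    show "inj_on (\<lambda>C. C \<inter> V) (V' // r')"
    proof (rule inj_onI)
      fix C D assume "C \<in> V' // r'" "D \<in> V' // r'" and CD: "C \<inter> V = D \<inter> V"
      then obtain x y where x: "x \<in> V'" "C = r' `` {x}" and y: "y \<in> V'" "D = r' `` {y}"
        by (auto simp: quotient_def)
      have "r `` {h x} = r `` {h y}" using key x y CD by auto
      moreover have "h y \<in> r `` {h y}" using \<open>refl r\<close> by (auto simp: refl_on_def)
      ultimately have "(h x, h y) \<in> r" by auto
      then have "(x, y) \<in> r'" using iff x y by auto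
      then show "C = D" using x y eq by (simp add: equiv_class_eq)
    qed
    show "(\<lambda>C. C \<inter> V) ` (V' // r') = V // r"
    proof
      show "(\<lambda>C. C \<inter> V) ` (V' // r') \<subseteq> V // r"
      proof
        fix C assume "C \<in> (\<lambda>C. C \<inter> V) ` (V' // r')"
        then obtain x where x: "x \<in> V'" "C = r' `` {x} \<inter> V" by (auto simp: quotient_def)
        then have "C = r `` {h x}" "h x \<in> V" using key assms(2) by auto
        then show "C \<in> V // r" by (auto simp: quotient_def)
      qed
      show "V // r \<subseteq> (\<lambda>C. C \<inter> V) ` (V' // r')"
      proof
        fix C assume "C \<in> V // r"
        then obtain z where z: "z \<in> V" "C = r `` {z}" by (auto simp: quotient_def)
        then have "C = r' `` {z} \<inter> V" using key[of z] assms(1,3) by auto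
        moreover have "r' `` {z} \<in> V' // r'" using z assms(1) by (auto simp: quotient_def)
        ultimately show "C \<in> (\<lambda>C. C \<inter> V) ` (V' // r')" by auto
      qed
    qed
  qed
  then show ?thesis by (rule bij_betw_same_card)
qed

lemma contract1:
  assumes "v \<notin> V" "p \<in> V" "q \<in> V" and G: "\<forall>(x, y) \<in> G. x \<noteq> v \<and> y \<noteq> v"
  shows "n_components (insert v V) (G \<union> {(p, v), (v, q)}) = n_components V (G \<union> {(p, q)})"
proof -
  define h where "h x = (if x = v then p else x)" for x
  let ?V' = "insert v V" and ?E' = "G \<union> {(p, v), (v, q)}" and ?E = "G \<union> {(p, q)}"
  let ?r' = "rc ?V' ?E'" and ?r = "rc V ?E"
  have S_r: "((?E \<union> ?E\<inverse>) \<inter> (V \<times> V)) \<subseteq> ?r'"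
  proof
    fix z assume z: "z \<in> (?E \<union> ?E\<inverse>) \<inter> (V \<times> V)"
    show "z \<in> ?r'"
    proof (cases "z = (p, q) \<or> z = (q, p)")
      case True
      have 1: "(p, v) \<in> ?r'" "(v, q) \<in> ?r'" "(q, v) \<in> ?r'" "(v, p) \<in> ?r'"
        using assms unfolding rc_def by (auto intro!: r_into_rtrancl)
      have "trans ?r'" using rc_equiv[of ?V' ?E'] by (simp add: equiv_def)
      then show ?thesis using True 1 by (meson transD)
    next
      case False
      then show ?thesis using z unfolding rc_def by (auto intro!: r_into_rtrancl)
    qed
  qed
  have r_r': "?r \<subseteq> ?r'"
  proof -
    have "?r \<subseteq> ?r'\<^sup>*" unfolding rc_def[of V] using S_r by (rule rtrancl_mono)
    also have "?r'\<^sup>* = ?r'" unfolding rc_def by simp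
    finally show ?thesis .
  qed
  have hx: "(x, h x) \<in> ?r'" for x
    using assms unfolding rc_def h_def by (auto intro!: r_into_rtrancl)
  have fwd: "(h x, h y) \<in> ?r" if "(x, y) \<in> ?r'" for x y
    using that unfolding rc_def[of ?V']
  proof (induction rule: rtrancl_induct)
    case base then show ?case by (simp add: rc_def)
  next
    case (step y z)
    have "(h y, h z) \<in> ?r"
    proof -
      have "(h y, h z) \<in> ((?E \<union> ?E\<inverse>) \<inter> (V \<times> V)) \<or> h y = h z"
        using step(2) assms unfolding h_def by auto
      then show ?thesis unfolding rc_def by auto
    qed
    then show ?case using step(3) unfolding rc_def by (meson rtrancl_trans)
  qed
  have iff: "\<forall>x\<in>?V'. \<forall>y\<in>?V'. (x, y) \<in> ?r' \<longleftrightarrow> (h x, h y) \<in> ?r"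
  proof (intro ballI iffI)
    fix x y assume "(h x, h y) \<in> ?r"
    then have "(h x, h y) \<in> ?r'" using r_r' by auto
    moreover have "(x, h x) \<in> ?r'" "(h y, y) \<in> ?r'"
      using hx[of x] hx[of y] rc_equiv[of ?V' ?E'] by (auto simp: equiv_def sym_def)
    ultimately show "(x, y) \<in> ?r'" using rc_equiv[of ?V' ?E'] by (meson equiv_def transD)
  qed (rule fwd)
  have "card (?V' // ?r') = card (V // ?r)"
    apply (rule card_quot_eq[where h = h])
    using assms iff rc_closed[of _ _ V ?E] rc_equiv[of V ?E] rc_equiv[of ?V' ?E']
    by (auto simp: h_def equiv_def)
  then show ?thesis unfolding n_components_def rc_def .
qed

lemma freeloop:
  assumes "e \<notin> V" "f \<notin> V" "e \<noteq> f" and G: "\<forall>(x, y) \<in> G. x \<noteq> e \<and> y \<noteq> e \<and> x \<noteq> f \<and> y \<noteq> f"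
    and "finite V"
  shows "n_components (insert e (insert f V)) (G \<union> {(e, f)}) = Suc (n_components V G)"
proof -
  let ?V' = "insert e (insert f V)" and ?E' = "G \<union> {(e, f)}"
  let ?r' = "rc ?V' ?E'" and ?r = "rc V G"
  have eqv': "equiv UNIV ?r'" by (rule rc_equiv)
  have r_r': "?r \<subseteq> ?r'" unfolding rc_def by (rule rtrancl_mono) auto
  have bk: "(x, y) \<in> ?r" if "(x, y) \<in> ?r'" "x \<in> V" for x y
    using that(1) unfolding rc_def[of ?V']
  proof (induction rule: rtrancl_induct)
    case base then show ?case by (simp add: rc_def)
  next
    case (step y z)
    have "y \<in> V" using step(3) rc_closed that(2) by metis
    then have "(y, z) \<in> (G \<union> G\<inverse>) \<inter> (V \<times> V)" using step(2) assms by auto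
    then show ?case using step(3) unfolding rc_def by (meson r_into_rtrancl rtrancl_trans)
  qed
  have clsV: "?r' `` {x} = ?r `` {x}" if "x \<in> V" for x
    using bk[OF _ that] r_r' by auto
  have ef: "(e, f) \<in> ?r'" unfolding rc_def by (auto intro!: r_into_rtrancl)
  have fromE: "y \<in> {e, f}" if "(e, y) \<in> ?r'" for y
    using that unfolding rc_def[of ?V']
  proof (induction rule: rtrancl_induct)
    case base then show ?case by simp
  next
    case (step y z)
    then show ?case using assms by auto
  qed
  have clsE: "?r' `` {e} = {e, f}"
  proof
    show "?r' `` {e} \<subseteq> {e, f}" using fromE by auto
    show "{e, f} \<subseteq> ?r' `` {e}" using ef eqv' by (auto simp: equiv_def refl_on_def)
  qed
  have clsF: "?r' `` {f} = {e, f}"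
    using clsE ef eqv' by (metis equiv_class_eq)
  have Q: "?V' // ?r' = insert {e, f} (V // ?r)"
    unfolding quotient_def using clsE clsF clsV by auto
  have fin: "finite (V // ?r)"
  proof -
    have "V // ?r = (\<lambda>x. ?r `` {x}) ` V" by (auto simp: quotient_def)
    then show ?thesis using assms(5) by simp
  qed
  have notin: "{e, f} \<notin> V // ?r"
  proof
    assume "{e, f} \<in> V // ?r"
    then obtain x where "x \<in> V" "{e, f} = ?r `` {x}" by (auto simp: quotient_def)
    then have "(x, e) \<in> ?r" by auto
    then show False using rc_closed \<open>x \<in> V\<close> assms(1) by metis
  qed
  show ?thesis unfolding n_components_def rc_def[symmetric] Q using fin notin by simp
qed

lemma ncomp_cong:
  assumes "V1 = V2" "E1 \<union> E1\<inverse> = E2 \<union> E2\<inverse>"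
  shows "n_components V1 E1 = n_components V2 E2"
  unfolding n_components_def using assms by simp



definition Gs :: "pd_crossing list \<Rightarrow> (nat \<times> nat) list \<Rightarrow> bool list \<Rightarrow> (nat \<times> nat) set" where
  "Gs cs ps s = set ps \<union> set (concat (map (\<lambda>(b, x). smooth b x) (zip s cs)))"

lemma state_loops_Gs: "state_loops (cs, ps) s = n_components (labels (cs, ps)) (Gs cs ps s)"
  unfolding state_loops_def Gs_def by simp

lemma labels_app: "labels (cs, ps @ qs) = labels (cs, ps) \<union> set (concat (map (\<lambda>(x, y). [x, y]) qs))"
  unfolding labels_def occs_def by auto

lemma labels_snoc: "labels (cs @ [x], ps) = labels (cs, ps) \<union> set (xlabels x)"
  unfolding labels_def occs_def by auto

lemma smooth_labels: "set (concat (map (\<lambda>(x, y). [x, y]) (smooth b x))) = set (xlabels x)"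
  by (cases x; cases b) auto

lemma Gs_sub: "(x, y) \<in> Gs cs ps s \<Longrightarrow> x \<in> labels (cs, ps) \<and> y \<in> labels (cs, ps)"
proof -
  assume h: "(x, y) \<in> Gs cs ps s"
  show ?thesis
  proof (cases "(x, y) \<in> set ps")
    case True then show ?thesis unfolding labels_def occs_def by force
  next
    case False
    then obtain b c where bc: "(b, c) \<in> set (zip s cs)" "(x, y) \<in> set (smooth b c)"
      using h unfolding Gs_def by auto
    then have c: "c \<in> set cs" by (meson set_zip_rightD)
    have "x \<in> set (xlabels c) \<and> y \<in> set (xlabels c)" using bc(2)
      by (cases c; cases b) auto
    then show ?thesis using c unfolding labels_def occs_def by auto
  qed
qed

lemma state_loops_snoc:
  assumes "length s = length cs"
  shows "state_loops (cs @ [x], ps) (s @ [b]) = state_loops (cs, ps @ smooth b x) s"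
proof -
  have "labels (cs @ [x], ps) = labels (cs, ps @ smooth b x)"
    unfolding labels_snoc labels_app smooth_labels ..
  moreover have "zip (s @ [b]) (cs @ [x]) = zip s cs @ [(b, x)]" using assms by simp
  ultimately show ?thesis unfolding state_loops_def by (simp add: Un_ac)
qed

lemma lists_Suc: "{s :: bool list. length s = Suc n} = (\<lambda>(s, b). s @ [b]) ` ({s. length s = n} \<times> UNIV)"
proof (rule equalityI)
  show "{s :: bool list. length s = Suc n} \<subseteq> (\<lambda>(s, b). s @ [b]) ` ({s. length s = n} \<times> UNIV)"
  proof (rule subsetI)
    fix s :: "bool list" assume "s \<in> {s. length s = Suc n}"
    then have "s = butlast s @ [last s]" "length (butlast s) = n"
      by (auto intro: append_butlast_last_id[symmetric])
    then show "s \<in> (\<lambda>(s, b). s @ [b]) ` ({s. length s = n} \<times> UNIV)"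
      by (metis (mono_tags, lifting) UNIV_I mem_Collect_eq mem_Sigma_iff pair_imageI)
  qed
qed auto

lemma powi_p1: "(A :: complex) \<noteq> 0 \<Longrightarrow> A powi (k + 1) = A * A powi k"
  by (simp add: power_int_add)

lemma powi_m1: "(A :: complex) \<noteq> 0 \<Longrightarrow> A powi (k - 1) = inverse A * A powi k"
  by (simp add: power_int_diff field_simps)

lemma bracket_snoc:
  assumes "A \<noteq> 0"
  shows "bracket (cs @ [x], ps) A = A * bracket (cs, ps @ smooth True x) A
           + inverse A * bracket (cs, ps @ smooth False x) A"
proof -
  let ?n = "length cs"
  define f where "f s = A powi (int (count_list s True) - int (count_list s False))
      * loop_value A ^ state_loops (cs @ [x], ps) s" for s
  define g where "g b s = A powi (int (count_list s True) - int (count_list s False))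
      * loop_value A ^ state_loops (cs, ps @ smooth b x) s" for b s
  note S = lists_Suc[of ?n]
  have inj: "inj_on (\<lambda>(s, b). s @ [b]) ({s. length s = ?n} \<times> (UNIV :: bool set))"
    by (auto simp: inj_on_def)
  have fin: "finite {s :: bool list. length s = ?n}" using finite_lists_length_eq[of "UNIV :: bool set" ?n] by simp
  have "bracket (cs @ [x], ps) A = sum f {s. length s = Suc ?n}"
    unfolding bracket_def f_def by simp
  also have "\<dots> = (\<Sum>(s, b) \<in> {s. length s = ?n} \<times> UNIV. f (s @ [b]))"
    unfolding S by (subst sum.reindex[OF inj]) (simp add: case_prod_beta')
  also have "\<dots> = (\<Sum>s \<in> {s. length s = ?n}. f (s @ [True]) + f (s @ [False]))"
    by (subst sum.cartesian_product[symmetric]) (simp add: UNIV_bool add.commute)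
  also have "\<dots> = (\<Sum>s \<in> {s. length s = ?n}. A * g True s + inverse A * g False s)"
  proof (rule sum.cong)
    fix s assume "s \<in> {s :: bool list. length s = ?n}"
    then have l: "length s = length cs" by simp
    let ?k = "int (count_list s True) - int (count_list s False)"
    have e1: "int (count_list (s @ [True]) True) - int (count_list (s @ [True]) False) = ?k + 1" by simp
    have e2: "int (count_list (s @ [False]) True) - int (count_list (s @ [False]) False) = ?k - 1" by simp
    have p1: "A powi (?k + 1) = A * A powi ?k" using assms by (rule powi_p1)
    have p2: "A powi (?k - 1) = inverse A * A powi ?k" using assms by (rule powi_m1)
    show "f (s @ [True]) + f (s @ [False]) = A * g True s + inverse A * g False s"
      unfolding f_def g_def state_loops_snoc[OF l] e1 e2 p1 p2 by simp
  qed simp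
  also have "\<dots> = A * bracket (cs, ps @ smooth True x) A + inverse A * bracket (cs, ps @ smooth False x) A"
    unfolding bracket_def g_def by (simp add: sum.distrib sum_distrib_left)
  finally show ?thesis .
qed



lemma Gs_app: "Gs cs (ps @ qs) s = Gs cs ps s \<union> set qs"
  unfolding Gs_def by auto

lemma bracket_loops_cong:
  assumes "\<And>s. length s = length cs \<Longrightarrow> state_loops (cs, ps1) s = state_loops (cs, ps2) s + k"
  shows "bracket (cs, ps1) A = loop_value A ^ k * bracket (cs, ps2) A"
  unfolding bracket_def sum_distrib_left
  by (rule sum.cong) (auto simp: assms power_add)

lemma lv_inv: "loop_value (inverse A) = loop_value A"
  unfolding loop_value_def by (simp add: power_inverse)

lemma R_eq:
  assumes "A \<noteq> 0"
  shows "R_diag D A = (if loop_value A = 0 then 0 else bracket D A * bracket D (inverse A))"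
proof -
  have l: "lam A + 2 = loop_value A ^ 2"
    unfolding lam_def loop_value_def using assms by (simp add: field_simps power2_eq_square) (simp add: eval_nat_numeral)
  show ?thesis unfolding R_diag_def jones_V_def lv_inv l
    by (simp add: power2_eq_square)
qed

lemma avoid:
  assumes "e \<notin> labels (cs, ps)" "f \<notin> labels (cs, ps)"
  shows "\<forall>(x, y) \<in> Gs cs ps s. x \<noteq> e \<and> y \<noteq> e \<and> x \<noteq> f \<and> y \<noteq> f"
  using Gs_sub[of _ _ cs ps s] assms by blast

context
  fixes a b c d e f :: nat and V0 :: "nat set" and G :: "(nat \<times> nat) set"
  assumes dist: "distinct [a, b, c, d, e, f]"
    and eV: "e \<notin> V0" and fV: "f \<notin> V0" and abcd: "a \<in> V0" "b \<in> V0" "c \<in> V0" "d \<in> V0"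
    and Gav: "\<forall>(x, y) \<in> G. x \<noteq> e \<and> y \<noteq> e \<and> x \<noteq> f \<and> y \<noteq> f"
begin

lemma case1: "n_components (insert e (insert f V0)) (G \<union> {(e, d), (f, c), (a, e), (b, f)})
   = n_components V0 (G \<union> {(a, d), (b, c)})"
proof -
  have "n_components (insert e (insert f V0)) (G \<union> {(e, d), (f, c), (a, e), (b, f)})
      = n_components (insert e (insert f V0)) ((G \<union> {(b, f), (f, c)}) \<union> {(a, e), (e, d)})"
    by (rule ncomp_cong) auto
  also have "\<dots> = n_components (insert f V0) ((G \<union> {(b, f), (f, c)}) \<union> {(a, d)})"
    by (rule contract1) (use dist eV fV abcd Gav in auto)
  also have "\<dots> = n_components (insert f V0) ((G \<union> {(a, d)}) \<union> {(b, f), (f, c)})"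
    by (rule ncomp_cong) auto
  also have "\<dots> = n_components V0 ((G \<union> {(a, d)}) \<union> {(b, c)})"
    by (rule contract1) (use dist eV fV abcd Gav in auto)
  also have "\<dots> = n_components V0 (G \<union> {(a, d), (b, c)})"
    by (rule ncomp_cong) auto
  finally show ?thesis .
qed

lemma case2: "n_components (insert e (insert f V0)) (G \<union> {(e, d), (f, c), (a, b), (f, e)})
   = n_components V0 (G \<union> {(a, b), (c, d)})"
proof -
  have "n_components (insert e (insert f V0)) (G \<union> {(e, d), (f, c), (a, b), (f, e)})
      = n_components (insert f (insert e V0)) ((G \<union> {(e, d), (a, b)}) \<union> {(c, f), (f, e)})"
    by (rule ncomp_cong) auto
  also have "\<dots> = n_components (insert e V0) ((G \<union> {(e, d), (a, b)}) \<union> {(c, e)})"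
    by (rule contract1) (use dist eV fV abcd Gav in auto)
  also have "\<dots> = n_components (insert e V0) ((G \<union> {(a, b)}) \<union> {(c, e), (e, d)})"
    by (rule ncomp_cong) auto
  also have "\<dots> = n_components V0 ((G \<union> {(a, b)}) \<union> {(c, d)})"
    by (rule contract1) (use dist eV fV abcd Gav in auto)
  also have "\<dots> = n_components V0 (G \<union> {(a, b), (c, d)})"
    by (rule ncomp_cong) auto
  finally show ?thesis .
qed

lemma case3: "n_components (insert e (insert f V0)) (G \<union> {(e, f), (c, d), (a, e), (b, f)})
   = n_components V0 (G \<union> {(a, b), (c, d)})"
proof -
  have "n_components (insert e (insert f V0)) (G \<union> {(e, f), (c, d), (a, e), (b, f)})
      = n_components (insert e (insert f V0)) ((G \<union> {(c, d), (b, f)}) \<union> {(a, e), (e, f)})"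
    by (rule ncomp_cong) auto
  also have "\<dots> = n_components (insert f V0) ((G \<union> {(c, d), (b, f)}) \<union> {(a, f)})"
    by (rule contract1) (use dist eV fV abcd Gav in auto)
  also have "\<dots> = n_components (insert f V0) ((G \<union> {(c, d)}) \<union> {(a, f), (f, b)})"
    by (rule ncomp_cong) auto
  also have "\<dots> = n_components V0 ((G \<union> {(c, d)}) \<union> {(a, b)})"
    by (rule contract1) (use dist eV fV abcd Gav in auto)
  also have "\<dots> = n_components V0 (G \<union> {(a, b), (c, d)})"
    by (rule ncomp_cong) auto
  finally show ?thesis .
qed

lemma case4:
  assumes "finite V0"
  shows "n_components (insert e (insert f V0)) (G \<union> {(e, f), (c, d), (a, b), (f, e)})
   = Suc (n_components V0 (G \<union> {(a, b), (c, d)}))"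
proof -
  have "n_components (insert e (insert f V0)) (G \<union> {(e, f), (c, d), (a, b), (f, e)})
      = n_components (insert e (insert f V0)) ((G \<union> {(a, b), (c, d)}) \<union> {(e, f)})"
    by (rule ncomp_cong) auto
  also have "\<dots> = Suc (n_components V0 (G \<union> {(a, b), (c, d)}))"
    by (rule freeloop) (use dist eV fV abcd Gav assms in auto)
  finally show ?thesis .
qed

end



theorem lemma1:
  fixes cs :: "pd_crossing list" and ps :: "(nat \<times> nat) list"
    and a b c d e f :: nat and A :: complex
  assumes "distinct [a, b, c, d, e, f]"
    and "e \<notin> labels (cs, ps)" and "f \<notin> labels (cs, ps)"
    and "is_diagram (cs @ [(a, b, f, e), (e, f, c, d)], ps)"
    and "is_diagram (cs @ [(a, b, c, d)], ps)"
    and "is_diagram (cs, ps @ [(a, d), (b, c)])"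
    and "is_diagram (cs @ [(b, c, d, a)], ps)"
    and "A \<noteq> 0"
  shows "R_diag (cs @ [(a, b, f, e), (e, f, c, d)], ps) A =
           (1 - lam A) * R_diag (cs @ [(a, b, c, d)], ps) A
         + (lam A - 1) * R_diag (cs, ps @ [(a, d), (b, c)]) A
         + R_diag (cs @ [(b, c, d, a)], ps) A"
proof -
  note dist = assms(1) and eL = assms(2) and fL = assms(3)
  define V0 where "V0 = insert a (insert b (insert c (insert d (labels (cs, ps)))))"
  have eV: "e \<notin> V0" and fV: "f \<notin> V0" using dist eL fL by (auto simp: V0_def)
  have abcd: "a \<in> V0" "b \<in> V0" "c \<in> V0" "d \<in> V0" by (auto simp: V0_def)
  have finV: "finite V0" by (simp add: V0_def labels_def)
  let ?D0 = "(cs, ps @ [(a, d), (b, c)])" and ?Di = "(cs, ps @ [(a, b), (c, d)])"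
  have L0: "labels ?D0 = V0" by (auto simp: labels_app V0_def)
  have Li: "labels ?Di = V0" by (auto simp: labels_app V0_def)
  have br1: "bracket (cs, (ps @ [(e, d), (f, c)]) @ [(a, e), (b, f)]) B = loop_value B ^ 0 * bracket ?D0 B" for B
  proof (rule bracket_loops_cong)
    fix s
    have "state_loops (cs, (ps @ [(e, d), (f, c)]) @ [(a, e), (b, f)]) s
        = n_components (insert e (insert f V0)) (Gs cs ps s \<union> {(e, d), (f, c), (a, e), (b, f)})"
      unfolding state_loops_Gs by (rule ncomp_cong) (auto simp: labels_app Gs_app V0_def)
    also have "\<dots> = n_components V0 (Gs cs ps s \<union> {(a, d), (b, c)})"
      by (rule case1[OF dist eV fV abcd avoid[OF eL fL]])
    also have "\<dots> = state_loops ?D0 s"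
      unfolding state_loops_Gs L0 by (rule ncomp_cong) (auto simp: Gs_app)
    finally show "state_loops (cs, (ps @ [(e, d), (f, c)]) @ [(a, e), (b, f)]) s = state_loops ?D0 s + 0" by simp
  qed
  have br2: "bracket (cs, (ps @ [(e, d), (f, c)]) @ [(a, b), (f, e)]) B = loop_value B ^ 0 * bracket ?Di B" for B
  proof (rule bracket_loops_cong)
    fix s
    have "state_loops (cs, (ps @ [(e, d), (f, c)]) @ [(a, b), (f, e)]) s
        = n_components (insert e (insert f V0)) (Gs cs ps s \<union> {(e, d), (f, c), (a, b), (f, e)})"
      unfolding state_loops_Gs by (rule ncomp_cong) (auto simp: labels_app Gs_app V0_def)
    also have "\<dots> = n_components V0 (Gs cs ps s \<union> {(a, b), (c, d)})"
      by (rule case2[OF dist eV fV abcd avoid[OF eL fL]])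
    also have "\<dots> = state_loops ?Di s"
      unfolding state_loops_Gs Li by (rule ncomp_cong) (auto simp: Gs_app)
    finally show "state_loops (cs, (ps @ [(e, d), (f, c)]) @ [(a, b), (f, e)]) s = state_loops ?Di s + 0" by simp
  qed
  have br3: "bracket (cs, (ps @ [(e, f), (c, d)]) @ [(a, e), (b, f)]) B = loop_value B ^ 0 * bracket ?Di B" for B
  proof (rule bracket_loops_cong)
    fix s
    have "state_loops (cs, (ps @ [(e, f), (c, d)]) @ [(a, e), (b, f)]) s
        = n_components (insert e (insert f V0)) (Gs cs ps s \<union> {(e, f), (c, d), (a, e), (b, f)})"
      unfolding state_loops_Gs by (rule ncomp_cong) (auto simp: labels_app Gs_app V0_def)
    also have "\<dots> = n_components V0 (Gs cs ps s \<union> {(a, b), (c, d)})"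
      by (rule case3[OF dist eV fV abcd avoid[OF eL fL]])
    also have "\<dots> = state_loops ?Di s"
      unfolding state_loops_Gs Li by (rule ncomp_cong) (auto simp: Gs_app)
    finally show "state_loops (cs, (ps @ [(e, f), (c, d)]) @ [(a, e), (b, f)]) s = state_loops ?Di s + 0" by simp
  qed
  have br4: "bracket (cs, (ps @ [(e, f), (c, d)]) @ [(a, b), (f, e)]) B = loop_value B ^ 1 * bracket ?Di B" for B
  proof (rule bracket_loops_cong)
    fix s
    have "state_loops (cs, (ps @ [(e, f), (c, d)]) @ [(a, b), (f, e)]) s
        = n_components (insert e (insert f V0)) (Gs cs ps s \<union> {(e, f), (c, d), (a, b), (f, e)})"
      unfolding state_loops_Gs by (rule ncomp_cong) (auto simp: labels_app Gs_app V0_def)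
    also have "\<dots> = Suc (n_components V0 (Gs cs ps s \<union> {(a, b), (c, d)}))"
      by (rule case4[OF dist eV fV abcd avoid[OF eL fL] finV])
    also have "\<dots> = Suc (state_loops ?Di s)"
      unfolding state_loops_Gs Li by (simp, rule ncomp_cong) (auto simp: Gs_app)
    finally show "state_loops (cs, (ps @ [(e, f), (c, d)]) @ [(a, b), (f, e)]) s = state_loops ?Di s + 1" by simp
  qed
  have brm1: "bracket (cs, ps @ [(b, a), (c, d)]) B = loop_value B ^ 0 * bracket ?Di B" for B
  proof (rule bracket_loops_cong)
    fix s show "state_loops (cs, ps @ [(b, a), (c, d)]) s = state_loops ?Di s + 0"
      unfolding state_loops_Gs by (simp, rule ncomp_cong) (auto simp: Gs_app labels_app)
  qed
  have brm2: "bracket (cs, ps @ [(b, c), (d, a)]) B = loop_value B ^ 0 * bracket ?D0 B" for B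
  proof (rule bracket_loops_cong)
    fix s show "state_loops (cs, ps @ [(b, c), (d, a)]) s = state_loops ?D0 s + 0"
      unfolding state_loops_Gs by (simp, rule ncomp_cong) (auto simp: Gs_app labels_app)
  qed
  have D2: "bracket (cs @ [(a, b, f, e), (e, f, c, d)], ps) B =
      B * (B * bracket ?D0 B + inverse B * bracket ?Di B)
      + inverse B * (B * bracket ?Di B + inverse B * (loop_value B * bracket ?Di B))"
    if "B \<noteq> 0" for B
  proof -
    have "bracket (cs @ [(a, b, f, e), (e, f, c, d)], ps) B = bracket ((cs @ [(a, b, f, e)]) @ [(e, f, c, d)], ps) B"
      by simp
    also have "\<dots> = B * (B * bracket (cs, (ps @ [(e, d), (f, c)]) @ [(a, e), (b, f)]) B
         + inverse B * bracket (cs, (ps @ [(e, d), (f, c)]) @ [(a, b), (f, e)]) B)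
       + inverse B * (B * bracket (cs, (ps @ [(e, f), (c, d)]) @ [(a, e), (b, f)]) B
         + inverse B * bracket (cs, (ps @ [(e, f), (c, d)]) @ [(a, b), (f, e)]) B)"
      by (simp only: bracket_snoc[OF that, of "cs @ [(a, b, f, e)]" "(e, f, c, d)" ps]
          bracket_snoc[OF that, of cs "(a, b, f, e)"] smooth.simps)
    finally show ?thesis by (simp only: br1 br2 br3 br4 power_0 power_one_right mult_1_left)
  qed
  have D1: "bracket (cs @ [(a, b, c, d)], ps) B = B * bracket ?D0 B + inverse B * bracket ?Di B"
    if "B \<noteq> 0" for B
    using that by (simp add: bracket_snoc)
  have Dm: "bracket (cs @ [(b, c, d, a)], ps) B = B * bracket ?Di B + inverse B * bracket ?D0 B"
    if "B \<noteq> 0" for B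
    using that bracket_snoc[OF that, of cs "(b, c, d, a)" ps] brm1 brm2 by simp
  have iA: "inverse A \<noteq> 0" using assms(8) by simp
  show ?thesis
  proof (cases "loop_value A = 0")
    case True
    then show ?thesis using assms(8) by (simp add: R_eq)
  next
    case False
    define x where "x = bracket ?D0 A"
    define y where "y = bracket ?Di A"
    define x' where "x' = bracket ?D0 (inverse A)"
    define y' where "y' = bracket ?Di (inverse A)"
    have lvi: "loop_value (inverse A) = loop_value A" by (rule lv_inv)
    show ?thesis
      unfolding R_eq[OF assms(8)] using False
      apply (simp add: D2[OF assms(8)] D2[OF iA] D1[OF assms(8)] D1[OF iA] Dm[OF assms(8)] Dm[OF iA] lvi
          flip: x_def y_def x'_def y'_def)
      using assms(8) unfolding lam_def loop_value_def
      apply (subgoal_tac "A * inverse A = 1")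
       apply algebra
      apply simp
      done
  qed
qed

end
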